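(* Let $\|\cdot\|$ be a polyhedral seminorm on $\mathbb{R}^n$, let $\mathcal{B}=\{x:\|x\|\le1\}$ and $p^*=W(\mathcal{B})$. Then there is a set $\Sigma$ of real $n\times n$ matrices for which $\|\cdot\|$ is nonincreasing and such that (i) every infinite periodic product of matrices from $\Sigma$ with period smaller than $p^*$ contracts $\|\cdot\|$, and (ii) not every left-infinite product of matrices from $\Sigma$ contracts $\|\cdot\|$.
   Context: A seminorm is polyhedral if its unit ball is a polyhedron (defined by finitely many linear inequalities). $\|\cdot\|$ is nonincreasing for $\Sigma$ if $\|Ax\|\le\|x\|$ for all $x$ and all $A\in\Sigma$. A left-infinite product $\dots A_{\sigma(2)}A_{\sigma(1)}$ contracts $\|\cdot\|$ if there is $t$ with $A_{\sigma(t)}\cdots A_{\sigma(1)}\mathcal{B}\subset\mathrm{int}(\mathcal{B})$; it is periodic with period $p$ if $\sigma(i+p)=\sigma(i)$ for all $i$. For a polyhedron $\mathcal{Q}$, a face is $\mathcal{Q}$, $\varnothing$, or a nonempty set $\mathcal{Q}\cap\{x:b^\top x=c\}$ where $b^\top x\le c$ on $\mathcal{Q}$; a proper face is a face other than $\mathcal{Q},\varnothing$. For centrally symmetric $\mathcal{Q}$, a double-face is $F\cup-F$ with $F$ a proper face; the lattice of double-faces is the set of double-faces together with $\mathcal{Q}$ and $\varnothing$, ordered by inclusion; $W(\mathcal{Q})$ is the maximum size of an antichain (set of pairwise incomparable elements) in this lattice. *)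

theory Defs
  imports "HOL-Analysis.Analysis"
begin

definition is_seminorm :: "('a::real_vector \<Rightarrow> real) \<Rightarrow> bool" where
  "is_seminorm N \<longleftrightarrow>
     (\<forall>x y. N (x + y) \<le> N x + N y) \<and> (\<forall>c x. N (c *\<^sub>R x) = \<bar>c\<bar> * N x)"

definition unit_ball :: "('a \<Rightarrow> real) \<Rightarrow> 'a set" where
  "unit_ball N = {x. N x \<le> 1}"

definition polyhedral_seminorm :: "('a::euclidean_space \<Rightarrow> real) \<Rightarrow> bool" where
  "polyhedral_seminorm N \<longleftrightarrow> is_seminorm N \<and> polyhedron (unit_ball N)"

definition poly_face :: "'a::euclidean_space set \<Rightarrow> 'a set \<Rightarrow> bool" where
  "poly_face Q F \<longleftrightarrow> F = Q \<or> F = {} \<or>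
     (F \<noteq> {} \<and> (\<exists>b c. (\<forall>x\<in>Q. b \<bullet> x \<le> c) \<and> F = Q \<inter> {x. b \<bullet> x = c}))"

definition proper_face :: "'a::euclidean_space set \<Rightarrow> 'a set \<Rightarrow> bool" where
  "proper_face Q F \<longleftrightarrow> poly_face Q F \<and> F \<noteq> Q \<and> F \<noteq> {}"

definition double_face_lattice :: "'a::euclidean_space set \<Rightarrow> 'a set set" where
  "double_face_lattice Q = {F \<union> uminus ` F | F. proper_face Q F} \<union> {Q, {}}"

definition is_antichain :: "'a set set \<Rightarrow> bool" where
  "is_antichain A \<longleftrightarrow> (\<forall>X\<in>A. \<forall>Y\<in>A. X \<noteq> Y \<longrightarrow> \<not> X \<subseteq> Y)"

definition W :: "'a::euclidean_space set \<Rightarrow> nat" where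
  "W Q = Max {card A | A. A \<subseteq> double_face_lattice Q \<and> is_antichain A}"

text \<open>Left-infinite products: M i is the (i+1)-st factor; lprod M t = M (t-1) ** ... ** M 0.\<close>
primrec lprod :: "(nat \<Rightarrow> real^'n^'n) \<Rightarrow> nat \<Rightarrow> real^'n^'n" where
  "lprod M 0 = mat 1"
| "lprod M (Suc t) = M t ** lprod M t"

definition nonincreasing_for :: "(real^'n \<Rightarrow> real) \<Rightarrow> (real^'n^'n) set \<Rightarrow> bool" where
  "nonincreasing_for N \<Sigma> \<longleftrightarrow> (\<forall>x. \<forall>A\<in>\<Sigma>. N (A *v x) \<le> N x)"

definition contracts :: "(nat \<Rightarrow> real^'n^'n) \<Rightarrow> (real^'n \<Rightarrow> real) \<Rightarrow> bool" where
  "contracts M N \<longleftrightarrow>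
     (\<exists>t. (\<lambda>x. lprod M t *v x) ` unit_ball N \<subseteq> interior (unit_ball N))"

definition periodic_with :: "(nat \<Rightarrow> 'b) \<Rightarrow> nat \<Rightarrow> bool" where
  "periodic_with M p \<longleftrightarrow> (\<forall>i. M (i + p) = M i)"

end

theory Submission
  imports Defs
begin


lemma sn_basic:
  assumes "is_seminorm N"
  shows "N 0 = 0" "\<And>x. N (- x) = N x" "\<And>x. N x \<ge> 0"
    "\<And>x y. N (x + y) \<le> N x + N y" "\<And>c x. N (c *\<^sub>R x) = \<bar>c\<bar> * N x"
proof -
  have tri: "\<And>x y. N (x + y) \<le> N x + N y" and sc: "\<And>c x. N (c *\<^sub>R x) = \<bar>c\<bar> * N x"
    using assms by (auto simp: is_seminorm_def)
  show "N 0 = 0" using sc[of 0 0] by simp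
  show neg: "\<And>x. N (- x) = N x" using sc[of "-1"] by simp
  show "\<And>x. N x \<ge> 0"
  proof -
    fix x
    have "N (x + - x) \<le> N x + N (- x)" by (rule tri)
    then show "N x \<ge> 0" using sc[of 0 0] neg[of x] by simp
  qed
  show "\<And>x y. N (x + y) \<le> N x + N y" by (rule tri)
  show "\<And>c x. N (c *\<^sub>R x) = \<bar>c\<bar> * N x" by (rule sc)
qed

lemma sn_cont:
  fixes N :: "'a::euclidean_space \<Rightarrow> real"
  assumes "is_seminorm N"
  shows "continuous_on UNIV N"
proof (rule convex_on_continuous)
  show "convex_on UNIV N"
  proof (rule convex_onI)
    fix t :: real and x y :: "'a" assume t: "t > 0" "t < 1"
    have "N ((1 - t) *\<^sub>R x + t *\<^sub>R y) \<le> N ((1 - t) *\<^sub>R x) + N (t *\<^sub>R y)"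
      using sn_basic(4)[OF assms] by blast
    also have "\<dots> = (1 - t) * N x + t * N y" using sn_basic(5)[OF assms] t by simp
    finally show "N ((1 - t) *\<^sub>R x + t *\<^sub>R y) \<le> (1 - t) * N x + t * N y" .
  qed simp
qed simp

lemma sn_interior:
  fixes N :: "'a::euclidean_space \<Rightarrow> real"
  assumes "is_seminorm N"
  shows "{x. N x < 1} \<subseteq> interior (unit_ball N)"
proof (rule interior_maximal)
  show "{x. N x < 1} \<subseteq> unit_ball N" by (auto simp: unit_ball_def)
  show "open {x. N x < 1}"
  proof -
    have "open (N -` {..<1})"
      using sn_cont[OF assms] by (simp add: continuous_on_open_vimage[OF open_UNIV])
    then show ?thesis by (simp add: vimage_def)
  qed
qed

lemma sn_not_interior:
  fixes N :: "'a::euclidean_space \<Rightarrow> real"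
  assumes "is_seminorm N" "N y = 1"
  shows "y \<notin> interior (unit_ball N)"
proof
  assume "y \<in> interior (unit_ball N)"
  then obtain e where e: "e > 0" "ball y e \<subseteq> unit_ball N"
    using mem_interior by blast
  have y0: "y \<noteq> 0" using assms sn_basic(1)[OF assms(1)] by auto
  define z where "z = (1 + e / (2 * norm y)) *\<^sub>R y"
  have "dist y z = e / 2" using y0 e unfolding z_def dist_norm
    by (simp add: algebra_simps)
  then have "z \<in> unit_ball N" using e by auto
  moreover have "N z = 1 + e / (2 * norm y)"
    unfolding z_def using sn_basic(5)[OF assms(1)] assms(2) e y0
    by (simp add: abs_of_pos)
  moreover have "e / (2 * norm y) > 0" using e y0 by simp
  ultimately show False by (simp add: unit_ball_def)
qed



definition outer :: "real^'n \<Rightarrow> real^'n \<Rightarrow> real^'n^'n" where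
  "outer u g = (\<chi> i j. u$i * g$j)"

lemma outer_mv: "outer u g *v x = (g \<bullet> x) *\<^sub>R u"
  by (auto simp: outer_def vec_eq_iff matrix_vector_mult_def inner_vec_def sum_distrib_left
      mult_ac intro!: sum.cong)

fun coef :: "(nat \<Rightarrow> real^'n) \<Rightarrow> (nat \<Rightarrow> real^'n) \<Rightarrow> nat \<Rightarrow> (nat \<Rightarrow> nat) \<Rightarrow> nat \<Rightarrow> real" where
  "coef g u m \<sigma> 0 = 1"
| "coef g u m \<sigma> (Suc t) = (g (\<sigma> (Suc t)) \<bullet> u ((\<sigma> t + 1) mod m)) * coef g u m \<sigma> t"

lemma lprod_formula:
  fixes u g :: "nat \<Rightarrow> real^'n"
  assumes "\<And>i. M i = outer (u ((\<sigma> i + 1) mod m)) (g (\<sigma> i))"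
  shows "lprod M (Suc t) *v x = (coef g u m \<sigma> t * (g (\<sigma> 0) \<bullet> x)) *\<^sub>R u ((\<sigma> t + 1) mod m)"
proof (induction t)
  case 0
  then show ?case by (simp add: assms outer_mv)
next
  case (Suc t)
  have "lprod M (Suc (Suc t)) *v x = M (Suc t) *v (lprod M (Suc t) *v x)"
    by (simp add: matrix_vector_mul_assoc)
  also have "\<dots> = (coef g u m \<sigma> (Suc t) * (g (\<sigma> 0) \<bullet> x)) *\<^sub>R u ((\<sigma> (Suc t) + 1) mod m)"
    unfolding Suc assms outer_mv by (simp add: inner_scaleR_right mult.commute mult.left_commute)
  finally show ?case .
qed

lemma construction:
  fixes N :: "real^'n \<Rightarrow> real" and u g :: "nat \<Rightarrow> real^'n"
  assumes sn: "is_seminorm N" and m: "m \<ge> 1"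
    and uB: "\<And>k. k < m \<Longrightarrow> N (u k) \<le> 1"
    and gN: "\<And>k x. k < m \<Longrightarrow> \<bar>g k \<bullet> x\<bar> \<le> N x"
    and gu: "\<And>k. k < m \<Longrightarrow> g k \<bullet> u k = 1"
    and cross: "\<And>j k. j < m \<Longrightarrow> k < m \<Longrightarrow> j \<noteq> k \<Longrightarrow> \<bar>g j \<bullet> u k\<bar> < 1"
  shows "\<exists>\<Sigma> :: (real^'n^'n) set.
           nonincreasing_for N \<Sigma> \<and>
           (\<forall>M. range M \<subseteq> \<Sigma> \<longrightarrow>
                (\<exists>p. 0 < p \<and> p < m \<and> periodic_with M p) \<longrightarrow>
                contracts M N) \<and>
           \<not> (\<forall>M. range M \<subseteq> \<Sigma> \<longrightarrow> contracts M N)"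
proof -
  define A where "A k = outer (u ((k + 1) mod m)) (g k)" for k
  have m0: "m > 0" using m by simp
  have uN: "N (u k) = 1" if "k < m" for k
    using uB[OF that] gN[OF that, of "u k"] gu[OF that] by simp
  have modlt: "(k + 1) mod m < m" for k using m0 by simp
  have fac: "\<bar>g j \<bullet> u k\<bar> \<le> 1" if "j < m" "k < m" for j k
    using gN[OF that(1), of "u k"] uN[OF that(2)] by simp
  have Ainj: "j = k" if "j < m" "k < m" "A j = A k" for j k
  proof (rule ccontr)
    assume ne: "j \<noteq> k"
    have "A j *v u j = u ((j + 1) mod m)" using gu[OF that(1)] by (simp add: A_def outer_mv)
    moreover have "A k *v u j = (g k \<bullet> u j) *\<^sub>R u ((k + 1) mod m)" by (simp add: A_def outer_mv)
    ultimately have "u ((j + 1) mod m) = (g k \<bullet> u j) *\<^sub>R u ((k + 1) mod m)" using that by simp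
    then have "N (u ((j + 1) mod m)) = \<bar>g k \<bullet> u j\<bar> * N (u ((k + 1) mod m))"
      using sn_basic(5)[OF sn] by simp
    then show False using uN[OF modlt] cross[OF that(2,1)] ne by simp
  qed
  define \<Sigma> where "\<Sigma> = A ` {..<m}"
  have key: "N (lprod M (Suc t) *v x) \<le> \<bar>coef g u m \<sigma> t\<bar> * N x"
    if "\<And>i. \<sigma> i < m" "\<And>i. M i = A (\<sigma> i)" for M \<sigma> t x
  proof -
    have "lprod M (Suc t) *v x = (coef g u m \<sigma> t * (g (\<sigma> 0) \<bullet> x)) *\<^sub>R u ((\<sigma> t + 1) mod m)"
      by (rule lprod_formula) (simp add: that A_def)
    then have "N (lprod M (Suc t) *v x) = \<bar>coef g u m \<sigma> t\<bar> * \<bar>g (\<sigma> 0) \<bullet> x\<bar>"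
      using sn_basic(5)[OF sn] uN[OF modlt] by (simp add: abs_mult)
    also have "\<dots> \<le> \<bar>coef g u m \<sigma> t\<bar> * N x"
      using gN[OF that(1)] by (simp add: mult_left_mono)
    finally show ?thesis .
  qed
  have coef_le: "\<bar>coef g u m \<sigma> t\<bar> \<le> 1" if "\<And>i. \<sigma> i < m" for \<sigma> t
  proof (induction t)
    case (Suc t)
    have "\<bar>g (\<sigma> (Suc t)) \<bullet> u ((\<sigma> t + 1) mod m)\<bar> \<le> 1" using fac[OF that modlt] .
    then show ?case using Suc by (simp add: abs_mult mult_le_one)
  qed simp
  have P1: "nonincreasing_for N \<Sigma>"
    unfolding nonincreasing_for_def \<Sigma>_def
  proof (intro allI ballI)
    fix x B assume "B \<in> A ` {..<m}"
    then obtain k where k: "k < m" "B = A k" by auto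
    have "N (B *v x) = \<bar>g k \<bullet> x\<bar>"
      using k sn_basic(5)[OF sn] uN[OF modlt] by (simp add: A_def outer_mv)
    then show "N (B *v x) \<le> N x" using gN[OF k(1)] by simp
  qed
  have P2: "contracts M N" if rM: "range M \<subseteq> \<Sigma>" and per: "\<exists>p. 0 < p \<and> p < m \<and> periodic_with M p" for M
  proof -
    define \<sigma> where "\<sigma> i = (SOME k. k < m \<and> M i = A k)" for i
    have s: "\<sigma> i < m \<and> M i = A (\<sigma> i)" for i
    proof -
      have "\<exists>k. k < m \<and> M i = A k" using rM unfolding \<Sigma>_def by auto
      then show ?thesis unfolding \<sigma>_def by (rule someI_ex)
    qed
    obtain p where p: "0 < p" "p < m" "periodic_with M p" using per by blast
    have sp: "\<sigma> p = \<sigma> 0"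
    proof -
      have "M (0 + p) = M 0" using p(3) unfolding periodic_with_def by blast
      then show ?thesis using s[of p] s[of 0] Ainj by auto
    qed
    have "\<exists>s. \<sigma> (Suc s) \<noteq> (\<sigma> s + 1) mod m"
    proof (rule ccontr)
      assume "\<not> ?thesis"
      then have h: "\<sigma> (Suc s) = (\<sigma> s + 1) mod m" for s by auto
      have "\<sigma> s = (\<sigma> 0 + s) mod m" for s
      proof (induction s)
        case 0 then show ?case using s[of 0] by simp
      next
        case (Suc s) then show ?case using h[of s] by (simp add: mod_Suc_eq)
      qed
      then have "\<sigma> p = (\<sigma> 0 + p) mod m" .
      then have e: "(\<sigma> 0 + p) mod m = \<sigma> 0" using sp by simp
      have a: "\<sigma> 0 < m" using s[of 0] by simp
      show False
      proof (cases "\<sigma> 0 + p < m")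
        case True then show False using e p by simp
      next
        case False
        then have "(\<sigma> 0 + p) mod m = (\<sigma> 0 + p - m) mod m" by (simp add: le_mod_geq)
        also have "\<dots> = \<sigma> 0 + p - m" using a p by (intro mod_less) simp
        finally show False using e p False by simp
      qed
    qed
    then obtain s0 where s0: "\<sigma> (Suc s0) \<noteq> (\<sigma> s0 + 1) mod m" by blast
    have "\<bar>g (\<sigma> (Suc s0)) \<bullet> u ((\<sigma> s0 + 1) mod m)\<bar> < 1"
      using cross[OF conjunct1[OF s] modlt s0] .
    moreover have "\<bar>coef g u m \<sigma> s0\<bar> \<le> 1" using coef_le[of \<sigma> s0] s by blast
    ultimately have "\<bar>g (\<sigma> (Suc s0)) \<bullet> u ((\<sigma> s0 + 1) mod m)\<bar> * \<bar>coef g u m \<sigma> s0\<bar> < 1"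
      by (smt (verit, best) abs_ge_zero mult_left_le)
    then have c1: "\<bar>coef g u m \<sigma> (Suc s0)\<bar> < 1" by (simp add: abs_mult)
    have "(\<lambda>x. lprod M (Suc (Suc s0)) *v x) ` unit_ball N \<subseteq> interior (unit_ball N)"
    proof (rule subset_trans[OF _ sn_interior[OF sn]], safe)
      fix x assume "x \<in> unit_ball N"
      then have "N x \<le> 1" by (simp add: unit_ball_def)
      have "N (lprod M (Suc (Suc s0)) *v x) \<le> \<bar>coef g u m \<sigma> (Suc s0)\<bar> * N x"
        using key[of \<sigma> M] s by blast
      also have "\<dots> \<le> \<bar>coef g u m \<sigma> (Suc s0)\<bar>"
        using \<open>N x \<le> 1\<close> by (simp add: mult_left_le)
      finally show "N (lprod M (Suc (Suc s0)) *v x) < 1" using c1 by simp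
    qed
    then show ?thesis unfolding contracts_def by blast
  qed
  have P3: "\<not> contracts (\<lambda>i. A (i mod m)) N"
  proof
    assume "contracts (\<lambda>i. A (i mod m)) N"
    then obtain t where t: "(\<lambda>x. lprod (\<lambda>i. A (i mod m)) t *v x) ` unit_ball N \<subseteq> interior (unit_ball N)"
      unfolding contracts_def by blast
    have u0: "u 0 \<in> unit_ball N" using uB[OF m0] by (simp add: unit_ball_def)
    have "N (lprod (\<lambda>i. A (i mod m)) t *v u 0) = 1"
    proof (cases t)
      case 0 then show ?thesis using uN[OF m0] by simp
    next
      case (Suc t')
      have c: "coef g u m (\<lambda>i. i mod m) k = 1" for k
      proof (induction k)
        case (Suc k)
        have "(k mod m + 1) mod m = Suc k mod m" by (simp add: mod_Suc_eq)
        then show ?case using Suc gu[of "Suc k mod m"] m0 by simp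
      qed simp
      have "lprod (\<lambda>i. A (i mod m)) (Suc t') *v u 0
          = (coef g u m (\<lambda>i. i mod m) t' * (g (0 mod m) \<bullet> u 0)) *\<^sub>R u ((t' mod m + 1) mod m)"
        by (rule lprod_formula) (simp add: A_def)
      then show ?thesis using Suc c gu[OF m0] uN[OF modlt] by simp
    qed
    then have "lprod (\<lambda>i. A (i mod m)) t *v u 0 \<notin> interior (unit_ball N)"
      by (rule sn_not_interior[OF sn])
    then show False using t u0 by blast
  qed
  have "range (\<lambda>i. A (i mod m)) \<subseteq> \<Sigma>" unfolding \<Sigma>_def using m0 by auto
  then show ?thesis using P1 P2 P3 by blast
qed



lemma ball_sym:
  assumes "is_seminorm N" "x \<in> unit_ball N"
  shows "- x \<in> unit_ball N"
  using assms sn_basic(2)[OF assms(1)] by (simp add: unit_ball_def)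

lemma proper_face_face:
  assumes "convex Q" "proper_face Q F"
  shows "F face_of Q"
proof -
  obtain b c where "\<forall>x\<in>Q. b \<bullet> x \<le> c" "F = Q \<inter> {x. b \<bullet> x = c}"
    using assms(2) unfolding proper_face_def poly_face_def by blast
  then show ?thesis using face_of_Int_supporting_hyperplane_le[OF assms(1)] by blast
qed

lemma face_data:
  fixes N :: "'a::euclidean_space \<Rightarrow> real"
  assumes sn: "is_seminorm N" and Q: "Q = unit_ball N" and pf: "proper_face Q F"
  shows "\<exists>g u. (\<forall>x. \<bar>g \<bullet> x\<bar> \<le> N x) \<and> (\<forall>x\<in>Q. \<bar>g \<bullet> x\<bar> \<le> 1) \<and>
     F = Q \<inter> {x. g \<bullet> x = 1} \<and> uminus ` F = Q \<inter> {x. g \<bullet> x = -1} \<and>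
     u \<in> rel_interior F \<and> g \<bullet> u = 1"
proof -
  obtain b c where bc: "\<forall>x\<in>Q. b \<bullet> x \<le> c" and F: "F = Q \<inter> {x. b \<bullet> x = c}"
    and Fne: "F \<noteq> {}" "F \<noteq> Q"
    using pf unfolding proper_face_def poly_face_def by blast
  have sym: "- x \<in> Q" if "x \<in> Q" for x using ball_sym[OF sn] that Q by simp
  have "0 \<in> Q" using sn_basic(1)[OF sn] Q by (simp add: unit_ball_def)
  then have c0: "c \<ge> 0" using bc by force
  have "c \<noteq> 0"
  proof
    assume "c = 0"
    then have "b \<bullet> x = 0" if "x \<in> Q" for x
      using bc sym[OF that] that by (smt (verit) inner_minus_right)
    then have "F = Q" using F \<open>c = 0\<close> by auto
    then show False using Fne by simp
  qed
  then have cpos: "c > 0" using c0 by simp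
  define g where "g = inverse c *\<^sub>R b"
  have gx: "g \<bullet> x = b \<bullet> x / c" for x by (simp add: g_def divide_inverse mult.commute)
  have gle: "g \<bullet> x \<le> 1" if "x \<in> Q" for x using bc that cpos by (simp add: gx)
  have gQ: "\<forall>x\<in>Q. \<bar>g \<bullet> x\<bar> \<le> 1"
  proof
    fix x assume x: "x \<in> Q"
    show "\<bar>g \<bullet> x\<bar> \<le> 1" using gle[OF x] gle[OF sym[OF x]] by (simp add: abs_le_iff)
  qed
  have gF: "F = Q \<inter> {x. g \<bullet> x = 1}" using F cpos by (auto simp: gx)
  have gmF: "uminus ` F = Q \<inter> {x. g \<bullet> x = -1}"
  proof safe
    fix x assume "x \<in> F" then show "- x \<in> Q" "g \<bullet> - x = -1" using gF sym by auto
  next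
    fix x assume "x \<in> Q" "g \<bullet> x = -1"
    then have "- x \<in> F" using gF sym by auto
    then show "x \<in> uminus ` F" by (metis image_eqI minus_minus)
  qed
  have gN: "\<bar>g \<bullet> x\<bar> \<le> N x" for x
  proof (cases "N x = 0")
    case True
    show ?thesis
    proof (rule ccontr)
      assume "\<not> ?thesis"
      then have ne: "\<bar>g \<bullet> x\<bar> > 0" using True by simp
      define t where "t = 2 / \<bar>g \<bullet> x\<bar>"
      have "t *\<^sub>R x \<in> Q" using True sn_basic(5)[OF sn] Q by (simp add: unit_ball_def)
      then have "\<bar>g \<bullet> (t *\<^sub>R x)\<bar> \<le> 1" using gQ by blast
      moreover have "\<bar>g \<bullet> (t *\<^sub>R x)\<bar> = 2" using ne by (simp add: t_def abs_mult)
      ultimately show False by simp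
    qed
  next
    case False
    then have pos: "N x > 0" using sn_basic(3)[OF sn, of x] by simp
    have "(inverse (N x)) *\<^sub>R x \<in> Q" using pos sn_basic(5)[OF sn] Q by (simp add: unit_ball_def)
    then have "\<bar>g \<bullet> (inverse (N x) *\<^sub>R x)\<bar> \<le> 1" using gQ by blast
    then have "\<bar>g \<bullet> x\<bar> / N x \<le> 1" using pos by (simp add: abs_mult divide_inverse mult.commute)
    then show ?thesis using pos by (simp add: divide_le_eq)
  qed
  have "convex Q"
  proof -
    show ?thesis unfolding convex_def Q unit_ball_def
    proof (intro allI ballI impI, simp)
      fix x y :: 'a and u v :: real assume h: "N x \<le> 1" "N y \<le> 1" "0 \<le> u" "0 \<le> v" "u + v = 1"
      have "N (u *\<^sub>R x + v *\<^sub>R y) \<le> N (u *\<^sub>R x) + N (v *\<^sub>R y)" using sn_basic(4)[OF sn] by blast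
      also have "\<dots> = u * N x + v * N y" using sn_basic(5)[OF sn] h by simp
      also have "\<dots> \<le> u * 1 + v * 1" using h by (intro add_mono mult_left_mono) auto
      finally show "N (u *\<^sub>R x + v *\<^sub>R y) \<le> 1" using h by simp
    qed
  qed
  then have "convex F" using face_of_imp_convex proper_face_face pf by blast
  then obtain u where u: "u \<in> rel_interior F" using rel_interior_eq_empty Fne by blast
  then have "g \<bullet> u = 1" using gF rel_interior_subset by blast
  then show ?thesis using gN gQ gF gmF u by blast
qed



lemma cross_lemma:
  fixes Q :: "'a::euclidean_space set"
  assumes conv: "convex Q"
    and ui: "u \<in> rel_interior Fi" and FiQ: "Fi \<subseteq> Q"
    and Fj: "Fj = Q \<inter> {x. g \<bullet> x = 1}" and mFj: "uminus ` Fj = Q \<inter> {x. g \<bullet> x = -1}"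
    and gQ: "\<forall>x\<in>Q. \<bar>g \<bullet> x\<bar> \<le> 1"
    and nsub: "\<not> (Fi \<union> uminus ` Fi \<subseteq> Fj \<union> uminus ` Fj)"
  shows "\<bar>g \<bullet> u\<bar> < 1"
proof (rule ccontr)
  assume na: "\<not> \<bar>g \<bullet> u\<bar> < 1"
  have uQ: "u \<in> Q" using ui FiQ rel_interior_subset by blast
  have "\<bar>g \<bullet> u\<bar> \<le> 1" using gQ uQ by blast
  then have "\<bar>g \<bullet> u\<bar> = 1" using na by linarith
  then consider "g \<bullet> u = 1" | "g \<bullet> u = -1" by linarith
  then show False
  proof cases
    case 1
    have "Fj face_of Q" unfolding Fj
      by (rule face_of_Int_supporting_hyperplane_le[OF conv]) (use gQ in force)
    moreover have "u \<in> Fj" using uQ 1 Fj by simp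
    then have "Fj \<inter> rel_interior Fi \<noteq> {}" using ui by blast
    ultimately have "Fi \<subseteq> Fj" by (rule subset_of_face_of[OF _ FiQ])
    then show False using nsub by blast
  next
    case 2
    have eq: "uminus ` Fj = Q \<inter> {x. (- g) \<bullet> x = 1}" using mFj by (auto simp: inner_minus_left)
    have "uminus ` Fj face_of Q" unfolding eq
      by (rule face_of_Int_supporting_hyperplane_le[OF conv]) (use gQ in \<open>force simp: inner_minus_left\<close>)
    moreover have "u \<in> uminus ` Fj" using uQ 2 mFj by simp
    then have "uminus ` Fj \<inter> rel_interior Fi \<noteq> {}" using ui by blast
    ultimately have "Fi \<subseteq> uminus ` Fj" by (rule subset_of_face_of[OF _ FiQ])
    then have "uminus ` Fi \<subseteq> Fj" by force
    then show False using nsub \<open>Fi \<subseteq> uminus ` Fj\<close> by blast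
  qed
qed



lemma lattice_finite:
  fixes Q :: "'a::euclidean_space set"
  assumes "polyhedron Q"
  shows "finite (double_face_lattice Q)"
proof -
  have "double_face_lattice Q \<subseteq> (\<lambda>F. F \<union> uminus ` F) ` {F. F face_of Q} \<union> {Q, {}}"
  proof
    fix G assume "G \<in> double_face_lattice Q"
    then consider "G \<in> {Q, {}}" | F where "proper_face Q F" "G = F \<union> uminus ` F"
      unfolding double_face_lattice_def by auto
    then show "G \<in> (\<lambda>F. F \<union> uminus ` F) ` {F. F face_of Q} \<union> {Q, {}}"
    proof cases
      case 2
      then have "F face_of Q" using proper_face_face[OF polyhedron_imp_convex[OF assms]] by blast
      then show ?thesis using 2 by (intro UnI1 image_eqI[of _ _ F]) simp_all
    qed blast
  qed
  then show ?thesis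
  proof (rule finite_subset)
    show "finite ((\<lambda>F. F \<union> uminus ` F) ` {F. F face_of Q} \<union> {Q, {}})"
      using finite_polyhedron_faces[OF assms] by (intro finite_UnI finite_imageI) simp_all
  qed
qed

lemma W_attained:
  fixes Q :: "'a::euclidean_space set"
  assumes "polyhedron Q"
  shows "\<exists>A. A \<subseteq> double_face_lattice Q \<and> is_antichain A \<and> card A = W Q"
proof -
  define L where "L = double_face_lattice Q"
  define S where "S = {card A | A. A \<subseteq> L \<and> is_antichain A}"
  have finL: "finite L" unfolding L_def by (rule lattice_finite[OF assms])
  have "S \<subseteq> {..card L}"
  proof
    fix c assume "c \<in> S"
    then obtain A where A: "A \<subseteq> L" "c = card A" unfolding S_def by auto
    have "card A \<le> card L" by (rule card_mono[OF finL A(1)])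
    then show "c \<in> {..card L}" using A(2) by simp
  qed
  then have fin: "finite S" by (rule finite_subset) simp
  have "{} \<subseteq> L \<and> is_antichain {}" by (simp add: is_antichain_def)
  then have "card {} \<in> S" unfolding S_def by (intro CollectI exI[of _ "{}"]) simp
  then have "S \<noteq> {}" by blast
  with fin have "Max S \<in> S" by (rule Max_in)
  then obtain A where A: "A \<subseteq> L" "is_antichain A" "Max S = card A" unfolding S_def by auto
  have "W Q = Max S" unfolding W_def S_def L_def ..
  then show ?thesis using A unfolding L_def by auto
qed



theorem theorem2:
  fixes N :: "real^'n \<Rightarrow> real"
  assumes "polyhedral_seminorm N"
    and "\<exists>x. N x \<noteq> 0"
  shows "\<exists>\<Sigma> :: (real^'n^'n) set.
           nonincreasing_for N \<Sigma> \<and>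
           (\<forall>M. range M \<subseteq> \<Sigma> \<longrightarrow>
                (\<exists>p. 0 < p \<and> p < W (unit_ball N) \<and> periodic_with M p) \<longrightarrow>
                contracts M N) \<and>
           \<not> (\<forall>M. range M \<subseteq> \<Sigma> \<longrightarrow> contracts M N)"
proof -
  have sn: "is_seminorm N" and poly: "polyhedron (unit_ball N)"
    using assms(1) by (auto simp: polyhedral_seminorm_def)
  define Q where "Q = unit_ball N"
  have convQ: "convex Q" unfolding Q_def by (rule polyhedron_imp_convex[OF poly])
  obtain x0 where x0: "N x0 \<noteq> 0" using assms(2) by blast
  then have x0p: "N x0 > 0" using sn_basic(3)[OF sn, of x0] by simp
  define y where "y = inverse (N x0) *\<^sub>R x0"
  have Ny: "N y = 1" unfolding y_def using sn_basic(5)[OF sn] x0p by simp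
  show ?thesis
  proof (cases "W (unit_ball N) \<le> 1")
    case True
    have lp: "lprod (\<lambda>_. mat 1) t = mat 1" for t :: nat
      by (induction t) (simp_all add: matrix_mul_lid)
    have "\<not> contracts (\<lambda>_. mat 1) N"
    proof
      assume "contracts (\<lambda>_. mat 1) N"
      then obtain t where t: "(\<lambda>x. lprod (\<lambda>_. mat 1) t *v x) ` unit_ball N \<subseteq> interior (unit_ball N)"
        unfolding contracts_def by blast
      have "y \<in> unit_ball N" using Ny by (simp add: unit_ball_def)
      then have "lprod (\<lambda>_. mat 1) t *v y \<in> interior (unit_ball N)" using t by blast
      then have "y \<in> interior (unit_ball N)" by (simp add: lp matrix_vector_mul_lid)
      then show False using sn_not_interior[OF sn Ny] by simp
    qed
    moreover have "range (\<lambda>_::nat. mat 1) \<subseteq> {mat 1 :: real^'n^'n}" by auto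
    moreover have "nonincreasing_for N {mat 1}" by (simp add: nonincreasing_for_def)
    ultimately show ?thesis using True by (intro exI[of _ "{mat 1}"]) auto
  next
    case False
    obtain A where A: "A \<subseteq> double_face_lattice Q" "is_antichain A" "card A = W Q"
      using W_attained[OF poly] unfolding Q_def by blast
    define m where "m = W Q"
    have m2: "m \<ge> 2" using False unfolding m_def Q_def by simp
    have finA: "finite A" using A(3) m2 m_def card.infinite by fastforce
    obtain h where h: "bij_betw h {0..<m} A"
      using ex_bij_betw_nat_finite[OF finA] A(3) m_def by auto
    have subQ: "G \<subseteq> Q" if "G \<in> double_face_lattice Q" for G
    proof -
      from that consider "G = Q" | "G = {}" | F where "proper_face Q F" "G = F \<union> uminus ` F"
        unfolding double_face_lattice_def by auto
      then show ?thesis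
      proof cases
        case 3
        have "F \<subseteq> Q" using 3(1) unfolding proper_face_def poly_face_def by auto
        moreover have "uminus ` F \<subseteq> Q" using \<open>F \<subseteq> Q\<close> ball_sym[OF sn] unfolding Q_def by auto
        ultimately show ?thesis using 3 by auto
      qed auto
    qed
    have isF: "\<exists>F. proper_face Q F \<and> G = F \<union> uminus ` F" if G: "G \<in> A" for G
    proof -
      have "\<exists>G'\<in>A. G' \<noteq> G"
      proof (rule ccontr)
        assume "\<not> ?thesis"
        then have "A \<subseteq> {G}" by auto
        then have "card A \<le> 1" using card_mono[of "{G}" A] by simp
        then show False using A(3) m2 m_def by simp
      qed
      then obtain G' where G': "G' \<in> A" "G' \<noteq> G" by blast
      have "G \<noteq> Q"
      proof
        assume "G = Q"
        then have "G' \<subseteq> G" using subQ A(1) G' by blast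
        then show False using A(2) G G' unfolding is_antichain_def by blast
      qed
      moreover have "G \<noteq> {}"
      proof
        assume "G = {}"
        then have "G \<subseteq> G'" by simp
        then show False using A(2) G G' unfolding is_antichain_def by blast
      qed
      moreover have "G \<in> double_face_lattice Q" using A(1) G by blast
      ultimately show ?thesis unfolding double_face_lattice_def by auto
    qed
    define P where "P k t \<longleftrightarrow> proper_face Q (fst t) \<and> h k = fst t \<union> uminus ` fst t \<and>
       (\<forall>x. \<bar>fst (snd t) \<bullet> x\<bar> \<le> N x) \<and> (\<forall>x\<in>Q. \<bar>fst (snd t) \<bullet> x\<bar> \<le> 1) \<and>
       fst t = Q \<inter> {x. fst (snd t) \<bullet> x = 1} \<and> uminus ` fst t = Q \<inter> {x. fst (snd t) \<bullet> x = -1} \<and>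
       snd (snd t) \<in> rel_interior (fst t) \<and> fst (snd t) \<bullet> snd (snd t) = 1" for k t
    have "\<forall>k. \<exists>t. k < m \<longrightarrow> P k t"
    proof (intro allI impI)
      fix k
      show "\<exists>t. k < m \<longrightarrow> P k t"
      proof (cases "k < m")
        case True
        then have "h k \<in> A" using h by (auto simp: bij_betw_def)
        then obtain F where F: "proper_face Q F" "h k = F \<union> uminus ` F" using isF by blast
        obtain g u where gu: "(\<forall>x. \<bar>g \<bullet> x\<bar> \<le> N x) \<and> (\<forall>x\<in>Q. \<bar>g \<bullet> x\<bar> \<le> 1) \<and>
          F = Q \<inter> {x. g \<bullet> x = 1} \<and> uminus ` F = Q \<inter> {x. g \<bullet> x = -1} \<and>
          u \<in> rel_interior F \<and> g \<bullet> u = 1"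
          using face_data[OF sn Q_def F(1)] by blast
        have "P k (F, g, u)" unfolding P_def fst_conv snd_conv using F gu by blast
        then show ?thesis by blast
      qed simp
    qed
    then obtain f where f: "\<And>k. k < m \<Longrightarrow> P k (f k)" by metis
    define F where "F k = fst (f k)" for k
    define g where "g k = fst (snd (f k))" for k
    define u where "u k = snd (snd (f k))" for k
    have Fk: "proper_face Q (F k)" "h k = F k \<union> uminus ` F k"
      "\<forall>x. \<bar>g k \<bullet> x\<bar> \<le> N x" "\<forall>x\<in>Q. \<bar>g k \<bullet> x\<bar> \<le> 1"
      "F k = Q \<inter> {x. g k \<bullet> x = 1}" "uminus ` F k = Q \<inter> {x. g k \<bullet> x = -1}"
      "u k \<in> rel_interior (F k)" "g k \<bullet> u k = 1" if "k < m" for k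
      using f[OF that] unfolding P_def F_def g_def u_def by auto
    have FQ: "F k \<subseteq> Q" if "k < m" for k using Fk(5)[OF that] by auto
    have uQ: "u k \<in> Q" if "k < m" for k using Fk(7)[OF that] FQ[OF that] rel_interior_subset by blast
    have "\<exists>\<Sigma> :: (real^'n^'n) set.
           nonincreasing_for N \<Sigma> \<and>
           (\<forall>M. range M \<subseteq> \<Sigma> \<longrightarrow>
                (\<exists>p. 0 < p \<and> p < m \<and> periodic_with M p) \<longrightarrow>
                contracts M N) \<and>
           \<not> (\<forall>M. range M \<subseteq> \<Sigma> \<longrightarrow> contracts M N)"
    proof (rule construction[OF sn, of m u g])
      show "1 \<le> m" using m2 by simp
      show "N (u k) \<le> 1" if "k < m" for k using uQ[OF that] unfolding Q_def unit_ball_def by simp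
      show "\<bar>g k \<bullet> x\<bar> \<le> N x" if "k < m" for k x using Fk(3)[OF that] by blast
      show "g k \<bullet> u k = 1" if "k < m" for k using Fk(8)[OF that] .
      show "\<bar>g j \<bullet> u k\<bar> < 1" if jk: "j < m" "k < m" "j \<noteq> k" for j k
      proof (rule cross_lemma[OF convQ Fk(7)[OF jk(2)] FQ[OF jk(2)] Fk(5)[OF jk(1)] Fk(6)[OF jk(1)] Fk(4)[OF jk(1)]])
        have "h k \<noteq> h j" using h jk unfolding bij_betw_def inj_on_def by auto
        moreover have "h k \<in> A" "h j \<in> A" using h jk by (auto simp: bij_betw_def)
        ultimately have "\<not> h k \<subseteq> h j" using A(2) unfolding is_antichain_def by blast
        then show "\<not> (F k \<union> uminus ` F k \<subseteq> F j \<union> uminus ` F j)"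
          using Fk(2)[OF jk(1)] Fk(2)[OF jk(2)] by simp
      qed
    qed
    then show ?thesis unfolding m_def Q_def .
  qed
qed


end
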